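(* Let $\mathbb F_q$ be any finite field. Then $R_q(2,t) \leq m_q(t)$ for all integers $t \geq 2$.
   Context: For $A \subseteq \mathbb F_q^n$, the direction set is $A^\to := \{d \in \mathbb F_q^n : \exists x \in \mathbb F_q^n \text{ with } x + \lambda d \in A \text{ for all } \lambda \in \mathbb F_q\}$, and $\omega^\to(A)$ is the largest dimension of a linear subspace of $\mathbb F_q^n$ contained in $A^\to \cup\{0\}$. $m_q(t)$ is the minimum $n$ such that every $A \subseteq \mathbb F_q^n$ with $|A| \geq q^{n-t+1}$ satisfies $\omega^\to(A) \geq t$. $R_q(s,t)$ denotes the minimum $n$ such that for every red-blue coloring of the $1$-dimensional linear subspaces of $\mathbb F_q^n$, there is either a linear subspace of dimension $s$ all of whose $1$-dimensional subspaces are red, or a linear subspace of dimension $t$ all of whose $1$-dimensional subspaces are blue. *)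

theory Defs
  imports Complex_Main "HOL-Library.Extended_Nat"
begin

text \<open>Vectors of F_q^n are represented as functions nat => 'a vanishing at indices >= n.\<close>

definition vecs :: "nat \<Rightarrow> (nat \<Rightarrow> 'a::field) set" where
  "vecs n = {v. \<forall>i\<ge>n. v i = 0}"

definition lin_comb :: "(nat \<Rightarrow> 'a::field) set \<Rightarrow> ((nat \<Rightarrow> 'a) \<Rightarrow> 'a) \<Rightarrow> (nat \<Rightarrow> 'a)" where
  "lin_comb B c = (\<lambda>i. \<Sum>b\<in>B. c b * b i)"

definition lin_span :: "(nat \<Rightarrow> 'a::field) set \<Rightarrow> (nat \<Rightarrow> 'a) set" where
  "lin_span B = {lin_comb B c | c. True}"

definition lin_indep :: "(nat \<Rightarrow> 'a::field) set \<Rightarrow> bool" where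
  "lin_indep B \<longleftrightarrow> (\<forall>c. lin_comb B c = (\<lambda>_. 0) \<longrightarrow> (\<forall>b\<in>B. c b = 0))"

definition subspace_dim :: "nat \<Rightarrow> (nat \<Rightarrow> 'a::field) set \<Rightarrow> nat \<Rightarrow> bool" where
  "subspace_dim n V d \<longleftrightarrow>
     (\<exists>B. finite B \<and> B \<subseteq> vecs n \<and> card B = d \<and> lin_indep B \<and> V = lin_span B)"

definition dir_set :: "nat \<Rightarrow> (nat \<Rightarrow> 'a::field) set \<Rightarrow> (nat \<Rightarrow> 'a) set" where
  "dir_set n A = {d \<in> vecs n. \<exists>x\<in>vecs n. \<forall>c::'a. (\<lambda>i. x i + c * d i) \<in> A}"

definition omega_dir :: "nat \<Rightarrow> (nat \<Rightarrow> 'a::field) set \<Rightarrow> nat" where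
  "omega_dir n A = Max {d. \<exists>V. subspace_dim n V d \<and> V \<subseteq> dir_set n A \<union> {\<lambda>_. 0}}"

text \<open>m_q(t) and R_q(s,t) as minima, valued in enat (infinity if no such n exists).\<close>
definition m_q :: "'a::{finite,field} itself \<Rightarrow> nat \<Rightarrow> enat" where
  "m_q _ t = Inf {enat n | n. \<forall>A::(nat \<Rightarrow> 'a) set. A \<subseteq> vecs n \<longrightarrow>
       real (card A) \<ge> (real (card (UNIV :: 'a set))) powi (int n - int t + 1) \<longrightarrow> omega_dir n A \<ge> t}"

definition R_q :: "'a::{finite,field} itself \<Rightarrow> nat \<Rightarrow> nat \<Rightarrow> enat" where
  "R_q _ s t = Inf {enat n | n. \<forall>red :: (nat \<Rightarrow> 'a) set \<Rightarrow> bool.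
       (\<exists>V. subspace_dim n V s \<and> (\<forall>L. subspace_dim n L 1 \<and> L \<subseteq> V \<longrightarrow> red L))
     \<or> (\<exists>V. subspace_dim n V t \<and> (\<forall>L. subspace_dim n L 1 \<and> L \<subseteq> V \<longrightarrow> \<not> red L))}"

end

theory Submission
  imports Defs "HOL-Library.FuncSet"
begin


lemma lin_comb_insert:
  assumes "finite B" "x \<notin> B"
  shows "lin_comb (insert x B) c = (\<lambda>i. c x * x i + lin_comb B c i)"
  using assms by (simp add: lin_comb_def)

lemma lin_comb_empty: "lin_comb {} c = (\<lambda>_. 0)"
  by (simp add: lin_comb_def)

lemma lin_comb_single: "lin_comb {y} c = (\<lambda>i. c y * y i)"
  by (simp add: lin_comb_def)

lemma lin_comb_pair: "u \<noteq> v \<Longrightarrow> lin_comb {u,v} c = (\<lambda>i. c u * u i + c v * v i)"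
  by (simp add: lin_comb_def)

lemma lin_comb_lin:
  "lin_comb B (\<lambda>b. a * c b + d b) = (\<lambda>i. a * lin_comb B c i + lin_comb B d i)"
  by (auto simp: lin_comb_def sum.distrib sum_distrib_left algebra_simps intro!: ext)

lemma lin_comb_diff:
  "lin_comb B (\<lambda>b. c b - d b) = (\<lambda>i. lin_comb B c i - lin_comb B d i)"
  by (auto simp: lin_comb_def sum_subtractf algebra_simps intro!: ext)

lemma lin_comb_restrict: "lin_comb B (restrict c B) = lin_comb B c"
  by (auto simp: lin_comb_def intro!: ext sum.cong)

lemma lin_span_add:
  assumes "u \<in> lin_span B" "v \<in> lin_span B"
  shows "(\<lambda>i. a * u i + v i) \<in> lin_span B"
proof -
  obtain c d where "u = lin_comb B c" "v = lin_comb B d" using assms by (auto simp: lin_span_def)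
  then show ?thesis unfolding lin_span_def using lin_comb_lin[of B a c d, symmetric] by auto
qed

lemma lin_span_zero: "(\<lambda>_. 0) \<in> lin_span B"
proof -
  have "lin_comb B (\<lambda>_. 0) = (\<lambda>_. 0)" by (simp add: lin_comb_def)
  then show ?thesis unfolding lin_span_def by (metis (mono_tags, lifting) mem_Collect_eq)
qed

lemma lin_span_smul:
  assumes "u \<in> lin_span B" shows "(\<lambda>i. a * u i) \<in> lin_span B"
  using lin_span_add[OF assms lin_span_zero, of a] by simp

lemma lin_span_base:
  assumes "finite B" "b \<in> B" shows "b \<in> lin_span B"
proof -
  have "lin_comb B (\<lambda>x. if x = b then 1 else 0) = b"
  proof
    fix i
    have "(\<Sum>x\<in>B. (if x = b then 1 else 0) * x i) = (\<Sum>x\<in>B. if x = b then x i else 0)"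
      by (rule sum.cong) auto
    also have "\<dots> = b i" using assms by simp
    finally show "lin_comb B (\<lambda>x. if x = b then 1 else 0) i = b i" by (simp add: lin_comb_def)
  qed
  then show ?thesis unfolding lin_span_def by (metis (mono_tags, lifting) mem_Collect_eq)
qed

lemma lin_span_single: "lin_span {y} = range (\<lambda>a i. a * y i)"
  unfolding lin_span_def lin_comb_single
  by auto

lemma lin_span_pair: "u \<noteq> v \<Longrightarrow> lin_span {u,v} = {(\<lambda>i. a * u i + b * v i) | a b. True}"
proof -
  assume "u \<noteq> v"
  then show ?thesis unfolding lin_span_def lin_comb_pair[OF \<open>u \<noteq> v\<close>]
  proof (auto)
    fix a b show "\<exists>c. (\<lambda>i. a * u i + b * v i) = (\<lambda>i. c u * u i + c v * v i)"
      using \<open>u \<noteq> v\<close> by (intro exI[of _ "\<lambda>x. if x = u then a else b"]) auto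
  qed
qed

lemma vecs_lin_comb:
  assumes "B \<subseteq> vecs n" shows "lin_comb B c \<in> vecs n"
  using assms by (auto simp: vecs_def lin_comb_def intro!: sum.neutral)

lemma lin_span_vecs: "B \<subseteq> vecs n \<Longrightarrow> lin_span B \<subseteq> vecs n"
  unfolding lin_span_def using vecs_lin_comb by blast

lemma vecs_eq: "vecs n = (\<lambda>f i. if i < n then f i else 0) ` (PiE {..<n} (\<lambda>_. (UNIV::'a::field set)))"
proof -
  { fix v :: "nat \<Rightarrow> 'a" assume v: "v \<in> vecs n"
    have "v = (\<lambda>i. if i < n then restrict v {..<n} i else 0)"
      using v by (auto simp: vecs_def intro!: ext)
    moreover have "restrict v {..<n} \<in> PiE {..<n} (\<lambda>_. UNIV)" by auto
    ultimately have "v \<in> (\<lambda>f i. if i < n then f i else 0) ` (PiE {..<n} (\<lambda>_. (UNIV::'a::field set)))"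
      by blast }
  then show ?thesis by (auto simp: vecs_def)
qed

lemma card_vecs: "card (vecs n :: (nat \<Rightarrow> 'a::{finite,field}) set) = card (UNIV::'a set) ^ n"
proof -
  have "inj_on (\<lambda>f i. if i < n then f i else (0::'a)) (PiE {..<n} (\<lambda>_. UNIV))"
  proof (rule inj_onI)
    fix f g :: "nat \<Rightarrow> 'a" assume f: "f \<in> PiE {..<n} (\<lambda>_. UNIV)" and g: "g \<in> PiE {..<n} (\<lambda>_. UNIV)"
      and e: "(\<lambda>i. if i < n then f i else 0) = (\<lambda>i. if i < n then g i else 0)"
    show "f = g"
    proof
      fix i show "f i = g i"
        using f g fun_cong[OF e, of i] by (cases "i < n") (auto simp: PiE_def extensional_def)
    qed
  qed
  then show ?thesis unfolding vecs_eq by (simp add: card_image card_PiE)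
qed

lemma finite_vecs: "finite (vecs n :: (nat \<Rightarrow> 'a::{finite,field}) set)"
  unfolding vecs_eq by (auto intro!: finite_PiE)

lemma card_lin_span:
  assumes "finite B" "lin_indep B"
  shows "card (lin_span B :: (nat \<Rightarrow> 'a::{finite,field}) set) = card (UNIV::'a set) ^ card B"
proof -
  have eq: "lin_span B = (\<lambda>c. lin_comb B c) ` (PiE B (\<lambda>_. UNIV))"
    unfolding lin_span_def
  proof (auto)
    fix c show "lin_comb B c \<in> (\<lambda>c. lin_comb B c) ` (PiE B (\<lambda>_. UNIV))"
      by (rule image_eqI[of _ _ "restrict c B"]) (auto simp: lin_comb_restrict)
  qed
  have "inj_on (\<lambda>c. lin_comb B c) (PiE B (\<lambda>_. UNIV))"
  proof (rule inj_onI)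
    fix c d assume c: "c \<in> PiE B (\<lambda>_. (UNIV::'a set))" and d: "d \<in> PiE B (\<lambda>_. UNIV)"
      and e: "lin_comb B c = lin_comb B d"
    have "lin_comb B (\<lambda>b. c b - d b) = (\<lambda>_. 0)" using e by (simp add: lin_comb_diff)
    then have "\<forall>b\<in>B. c b - d b = 0" using assms(2) unfolding lin_indep_def by blast
    then show "c = d" using c d by (auto simp: PiE_def extensional_def intro!: ext)
  qed
  then show ?thesis unfolding eq using assms(1) by (simp add: card_image card_PiE)
qed

lemma q_ge2: "card (UNIV::'a::{finite,field} set) \<ge> 2"
proof -
  have "{0::'a, 1} \<subseteq> UNIV" by simp
  then have "card {0::'a,1} \<le> card (UNIV::'a set)" by (rule card_mono[OF finite_UNIV])
  then show ?thesis by simp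
qed

lemma dim_le:
  assumes "subspace_dim n (V :: (nat \<Rightarrow> 'a::{finite,field}) set) d" shows "d \<le> n"
proof -
  obtain B where B: "finite B" "B \<subseteq> vecs n" "card B = d" "lin_indep B" "V = lin_span B"
    using assms unfolding subspace_dim_def by blast
  have "card V \<le> card (vecs n :: (nat \<Rightarrow> 'a) set)"
    using B lin_span_vecs finite_vecs by (metis card_mono)
  then have "card (UNIV::'a set) ^ d \<le> card (UNIV::'a set) ^ n" using B card_lin_span card_vecs by metis
  then show ?thesis using q_ge2[where 'a='a] by (meson power_le_imp_le_exp one_less_numeral_iff semiring_norm(76) less_le_trans)
qed



lemma lin_comb_subset:
  assumes "finite B" "B' \<subseteq> B"
  shows "lin_comb B (\<lambda>b. if b \<in> B' then c b else 0) = lin_comb B' c"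
proof
  fix i
  have "(\<Sum>b\<in>B. (if b \<in> B' then c b else 0) * b i) = (\<Sum>b\<in>B. if b \<in> B' then c b * b i else 0)"
    by (rule sum.cong) auto
  also have "\<dots> = (\<Sum>b\<in>B \<inter> B'. c b * b i)" using assms by (simp add: sum.inter_restrict)
  also have "B \<inter> B' = B'" using assms by auto
  finally show "lin_comb B (\<lambda>b. if b \<in> B' then c b else 0) i = lin_comb B' c i"
    by (simp add: lin_comb_def)
qed

lemma lin_indep_subset:
  assumes "finite B" "B' \<subseteq> B" "lin_indep B" shows "lin_indep B'"
  unfolding lin_indep_def
proof (intro allI impI ballI)
  fix c b assume c: "lin_comb B' c = (\<lambda>_. 0)" and b: "b \<in> B'"
  have "lin_comb B (\<lambda>b. if b \<in> B' then c b else 0) = (\<lambda>_. 0)"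
    using c lin_comb_subset[OF assms(1,2)] by simp
  then have "\<forall>x\<in>B. (if x \<in> B' then c x else 0) = 0" using assms(3) unfolding lin_indep_def by blast
  then show "c b = 0" using b assms(2) by (metis subsetD)
qed

lemma lin_span_subset:
  assumes "finite B" "B' \<subseteq> B" shows "lin_span B' \<subseteq> lin_span B"
  unfolding lin_span_def using lin_comb_subset[OF assms] by (auto) (metis)

lemma one_dim:
  assumes "subspace_dim n L 1"
  shows "\<exists>y\<in>vecs n. y \<noteq> (\<lambda>_. 0) \<and> L = lin_span {y}"
proof -
  obtain B where B: "finite B" "B \<subseteq> vecs n" "card B = 1" "lin_indep B" "L = lin_span B"
    using assms unfolding subspace_dim_def by blast
  obtain y where y: "B = {y}" using B(3) card_1_singletonE by blast
  have "y \<noteq> (\<lambda>_. 0)"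
  proof
    assume "y = (\<lambda>_. 0)"
    then have "lin_comb {y} (\<lambda>_. 1) = (\<lambda>_. 0)" by (simp add: lin_comb_single)
    then show False using B(4) y unfolding lin_indep_def by auto
  qed
  then show ?thesis using B y by auto
qed

lemma single_dim:
  assumes "y \<in> vecs n" "y \<noteq> (\<lambda>_. 0)" shows "subspace_dim n (lin_span {y}) 1"
  unfolding subspace_dim_def
proof (intro exI[of _ "{y}"] conjI)
  show "lin_indep {y}" unfolding lin_indep_def lin_comb_single
  proof (intro allI impI ballI)
    fix c b assume "(\<lambda>i. c y * y i) = (\<lambda>_. 0)" "b \<in> {y}"
    moreover obtain i where "y i \<noteq> 0" using assms(2) by auto
    ultimately show "c b = 0" by (metis mult_eq_0_iff singletonD)
  qed
qed (use assms in auto)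

lemma pair_dim:
  assumes "u \<in> vecs n" "v \<in> vecs n" "u \<noteq> v"
    and ind: "\<And>a b. (\<lambda>i. a * u i + b * v i) = (\<lambda>_. 0) \<Longrightarrow> a = 0 \<and> b = 0"
  shows "subspace_dim n (lin_span {u,v}) 2"
  unfolding subspace_dim_def
proof (intro exI[of _ "{u,v}"] conjI)
  show "lin_indep {u,v}" unfolding lin_indep_def lin_comb_pair[OF assms(3)]
    using ind by blast
qed (use assms in auto)

lemma omega_ge:
  assumes "omega_dir n (A :: (nat \<Rightarrow> 'a::{finite,field}) set) \<ge> t"
  shows "\<exists>V d. d \<ge> t \<and> subspace_dim n V d \<and> V \<subseteq> dir_set n A \<union> {\<lambda>_. 0}"
proof -
  let ?D = "{d. \<exists>V. subspace_dim n V d \<and> V \<subseteq> dir_set n A \<union> {\<lambda>_. 0}}"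
  have fin: "finite ?D"
    by (rule finite_subset[of _ "{..n}"]) (auto dest: dim_le)
  have "subspace_dim n (lin_span {} :: (nat \<Rightarrow> 'a) set) 0"
    unfolding subspace_dim_def by (intro exI[of _ "{}"]) (auto simp: lin_indep_def)
  moreover have "lin_span {} = {(\<lambda>_. 0::'a)}" by (simp add: lin_span_def lin_comb_empty)
  ultimately have "0 \<in> ?D" by auto
  then have "Max ?D \<in> ?D" using fin by (intro Max_in) auto
  then show ?thesis using assms unfolding omega_dir_def by blast
qed



definition scal_closed :: "(nat \<Rightarrow> 'a::field) set \<Rightarrow> bool" where
  "scal_closed S \<longleftrightarrow> (\<forall>y\<in>S. \<forall>c. c \<noteq> 0 \<longrightarrow> (\<lambda>i. c * y i) \<in> S)"

lemma ext_step:
  fixes S :: "(nat \<Rightarrow> 'a::{finite,field}) set"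
  assumes B: "finite B" "B \<subseteq> vecs n" "lin_indep B" and disj: "lin_span B \<inter> S = {}"
    and S: "S \<subseteq> vecs n" "scal_closed S"
    and cond: "card S * card (lin_span B) < card (vecs n :: (nat \<Rightarrow> 'a) set) - card (lin_span B) \<or>
      (card S * card (lin_span B) \<le> card (vecs n :: (nat \<Rightarrow> 'a) set) - card (lin_span B) \<and>
        (\<exists>s1\<in>S. \<exists>s2\<in>S. s1 \<noteq> s2 \<and> (\<lambda>i. s1 i - s2 i) \<in> lin_span B))"
  shows "\<exists>x. x \<in> vecs n \<and> x \<notin> lin_span B \<and> lin_indep (insert x B) \<and> lin_span (insert x B) \<inter> S = {}"
proof -
  define W where "W = lin_span B"
  have Wv: "W \<subseteq> vecs n" unfolding W_def using lin_span_vecs[OF B(2)] .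
  have finW: "finite W" using Wv finite_vecs finite_subset by blast
  have finS: "finite S" using S(1) finite_vecs finite_subset by blast
  have "\<exists>x \<in> vecs n - W. \<forall>w\<in>W. (\<lambda>i. x i + w i) \<notin> S"
  proof (rule ccontr)
    assume "\<not> ?thesis"
    then have H: "\<forall>x\<in>vecs n - W. \<exists>w\<in>W. (\<lambda>i. x i + w i) \<in> S" by blast
    define f where "f = (\<lambda>(s::nat\<Rightarrow>'a, w::nat\<Rightarrow>'a). (\<lambda>i. s i - w i))"
    have sub: "vecs n - W \<subseteq> f ` (S \<times> W)"
    proof
      fix x assume x: "x \<in> vecs n - W"
      then obtain w where w: "w \<in> W" "(\<lambda>i. x i + w i) \<in> S" using H by blast
      have "x = f ((\<lambda>i. x i + w i), w)" by (simp add: f_def)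
      then show "x \<in> f ` (S \<times> W)" using w by blast
    qed
    have c1: "card (vecs n - W) = card (vecs n :: (nat \<Rightarrow> 'a) set) - card W"
      using Wv finW by (simp add: card_Diff_subset)
    have c2: "card (vecs n - W) \<le> card (f ` (S \<times> W))"
      using sub finS finW by (intro card_mono) auto
    have c3: "card (f ` (S \<times> W)) \<le> card S * card W"
      using card_image_le[of "S \<times> W" f] finS finW by (simp add: card_cartesian_product)
    show False
    proof (cases "card S * card W < card (vecs n :: (nat \<Rightarrow> 'a) set) - card W")
      case True then show ?thesis using c1 c2 c3 by linarith
    next
      case False
      then obtain s1 s2 where s: "s1 \<in> S" "s2 \<in> S" "s1 \<noteq> s2" "(\<lambda>i. s1 i - s2 i) \<in> W"
        using cond unfolding W_def by auto
      have z: "(\<lambda>_. 0) \<in> W" unfolding W_def by (rule lin_span_zero)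
      have "f (s1, (\<lambda>i. s1 i - s2 i)) = f (s2, (\<lambda>_. 0))" by (simp add: f_def)
      moreover have "(s1, (\<lambda>i. s1 i - s2 i)) \<noteq> (s2, (\<lambda>_. 0))" using s by auto
      ultimately have "\<not> inj_on f (S \<times> W)" using s z by (meson SigmaI inj_onD)
      then have "card (f ` (S \<times> W)) \<noteq> card (S \<times> W)" using finS finW
        by (metis finite_cartesian_product inj_on_iff_eq_card)
      then have "card (f ` (S \<times> W)) < card S * card W"
        using card_image_le[of "S \<times> W" f] finS finW by (simp add: card_cartesian_product)
      moreover have "card S * card W \<le> card (vecs n :: (nat \<Rightarrow> 'a) set) - card W"
        using cond False unfolding W_def by auto
      ultimately show ?thesis using c1 c2 by linarith
    qed
  qed
  then obtain x where x: "x \<in> vecs n" "x \<notin> W" and xw: "\<forall>w\<in>W. (\<lambda>i. x i + w i) \<notin> S" by blast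
  have xB: "x \<notin> B" using x(2) lin_span_base[OF B(1)] unfolding W_def by blast
  have ind: "lin_indep (insert x B)"
    unfolding lin_indep_def
  proof (intro allI impI)
    fix c assume c: "lin_comb (insert x B) c = (\<lambda>_. 0)"
    then have c': "\<And>i. c x * x i + lin_comb B c i = 0" using lin_comb_insert[OF B(1) xB, of c]
      by (metis)
    have cx: "c x = 0"
    proof (rule ccontr)
      assume cx: "c x \<noteq> 0"
      have "(\<lambda>i. (- 1 / c x) * lin_comb B c i) \<in> W" unfolding W_def
        by (rule lin_span_smul) (auto simp: lin_span_def)
      moreover have "(\<lambda>i. (- 1 / c x) * lin_comb B c i) = x"
      proof
        fix i have "lin_comb B c i = - (c x * x i)" using c'[of i] by (simp add: eq_neg_iff_add_eq_0 add.commute)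
        then show "(- 1 / c x) * lin_comb B c i = x i" using cx by (simp add: field_simps)
      qed
      ultimately show False using x(2) by simp
    qed
    then have "lin_comb B c = (\<lambda>_. 0)" using c' by auto
    then have "\<forall>b\<in>B. c b = 0" using B(3) unfolding lin_indep_def by blast
    then show "\<forall>b\<in>insert x B. c b = 0" using cx by auto
  qed
  have "lin_span (insert x B) \<inter> S = {}"
  proof (rule ccontr)
    assume "lin_span (insert x B) \<inter> S \<noteq> {}"
    then obtain c where zS: "lin_comb (insert x B) c \<in> S" by (auto simp: lin_span_def)
    have zeq: "lin_comb (insert x B) c = (\<lambda>i. c x * x i + lin_comb B c i)"
      by (rule lin_comb_insert[OF B(1) xB])
    show False
    proof (cases "c x = 0")
      case True
      then have "lin_comb B c \<in> S" using zS zeq by simp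
      moreover have "lin_comb B c \<in> W" unfolding W_def lin_span_def by auto
      ultimately show False using disj unfolding W_def by blast
    next
      case False
      define w where "w = (\<lambda>i. (1 / c x) * lin_comb B c i)"
      have wW: "w \<in> W" unfolding W_def w_def
        by (rule lin_span_smul) (auto simp: lin_span_def)
      have "(\<lambda>i. (1 / c x) * (c x * x i + lin_comb B c i)) \<in> S"
        using S(2) zS zeq False unfolding scal_closed_def by (metis divide_eq_0_iff one_neq_zero)
      moreover have "(\<lambda>i. (1 / c x) * (c x * x i + lin_comb B c i)) = (\<lambda>i. x i + w i)"
        using False by (auto simp: w_def field_simps)
      ultimately show False using xw wW by auto
    qed
  qed
  then show ?thesis using x ind unfolding W_def by blast
qed

lemma ext_iter:
  fixes S :: "(nat \<Rightarrow> 'a::{finite,field}) set"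
  assumes B: "finite B" "B \<subseteq> vecs n" "lin_indep B" and disj: "lin_span B \<inter> S = {}"
    and S: "S \<subseteq> vecs n" "scal_closed S"
    and bound: "\<And>s. card B \<le> s \<Longrightarrow> s < card B + m \<Longrightarrow>
       card S * card (UNIV::'a set) ^ s < card (UNIV::'a set) ^ n - card (UNIV::'a set) ^ s"
  shows "\<exists>B'. B \<subseteq> B' \<and> finite B' \<and> B' \<subseteq> vecs n \<and> lin_indep B' \<and> card B' = card B + m
     \<and> lin_span B' \<inter> S = {}"
  using bound
proof (induction m)
  case 0 then show ?case using B disj by auto
next
  case (Suc m)
  then obtain B' where B': "B \<subseteq> B'" "finite B'" "B' \<subseteq> vecs n" "lin_indep B'" "card B' = card B + m"
     "lin_span B' \<inter> S = {}" by fastforce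
  have "card S * card (lin_span B') < card (vecs n :: (nat \<Rightarrow> 'a) set) - card (lin_span B')"
    using Suc.prems[of "card B + m"] card_lin_span[OF B'(2,4)] card_vecs[where 'a='a] B'(5) by simp
  then obtain x where x: "x \<in> vecs n" "x \<notin> lin_span B'" "lin_indep (insert x B')" "lin_span (insert x B') \<inter> S = {}"
    using ext_step[OF B'(2,3,4,6) S] by blast
  have "x \<notin> B'" using x(2) lin_span_base[OF B'(2)] by blast
  then show ?case using B' x by (intro exI[of _ "insert x B'"]) auto
qed



lemma arith1:
  fixes q X k s n :: nat
  assumes "q \<ge> 2" "X < q ^ k" "k + s < n"
  shows "X * q ^ s < q ^ n - q ^ s"
proof -
  have "(X + 1) * q ^ s \<le> q ^ k * q ^ s" using assms(2) by (intro mult_right_mono) auto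
  also have "\<dots> = q ^ (k + s)" by (simp add: power_add)
  also have "\<dots> < q ^ n" using assms by (intro power_strict_increasing) auto
  finally show ?thesis by (simp add: algebra_simps)
qed

lemma arith2:
  fixes q X k s n :: nat
  assumes "X < q ^ k" "k + s = n"
  shows "X * q ^ s \<le> q ^ n - q ^ s"
proof -
  have "(X + 1) * q ^ s \<le> q ^ k * q ^ s" using assms(1) by (intro mult_right_mono) auto
  also have "\<dots> = q ^ n" using assms by (metis power_add)
  finally show ?thesis by (simp add: algebra_simps)
qed

lemma arith3:
  fixes q X k s n :: nat
  assumes "q \<ge> 2" "X + 1 < q ^ k" "k + s = n"
  shows "X * q ^ s < q ^ n - q ^ s"
proof -
  have "(X + 1) * q ^ s < q ^ k * q ^ s" using assms by (intro mult_strict_right_mono) auto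
  also have "\<dots> = q ^ n" using assms by (metis power_add)
  finally show ?thesis by (simp add: algebra_simps)
qed

lemma single_indep:
  assumes "y \<noteq> (\<lambda>_. 0)" shows "lin_indep {y}"
  unfolding lin_indep_def lin_comb_single
proof (intro allI impI ballI)
  fix c b assume "(\<lambda>i. c y * y i) = (\<lambda>_. 0)" "b \<in> {y}"
  moreover obtain i where "y i \<noteq> 0" using assms by auto
  ultimately show "c b = 0" by (metis mult_eq_0_iff singletonD)
qed

lemma span_scal:
  assumes "c \<noteq> 0" shows "lin_span {(\<lambda>i. c * y i)} = lin_span {y}"
  unfolding lin_span_single
proof (auto)
  fix a show "(\<lambda>i. a * (c * y i)) \<in> range (\<lambda>a i. a * y i)"
    by (rule image_eqI[of _ _ "a * c"]) (auto simp: mult.assoc)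
next
  fix a show "(\<lambda>i. a * y i) \<in> range (\<lambda>a i. a * (c * y i))"
    by (rule image_eqI[of _ _ "a / c"]) (use assms in \<open>auto simp: field_simps\<close>)
qed

lemma not_small:
  fixes t n :: nat
  assumes t: "t \<ge> 2" and P: "\<forall>A::(nat\<Rightarrow>'a::{finite,field}) set. A \<subseteq> vecs n \<longrightarrow>
       real (card A) \<ge> (real (card (UNIV :: 'a set))) powi (int n - int t + 1) \<longrightarrow> omega_dir n A \<ge> t"
  shows "t + 1 \<le> n"
proof (rule ccontr)
  assume "\<not> t + 1 \<le> n"
  then have nt: "n \<le> t" by simp
  let ?q = "card (UNIV :: 'a set)"
  have q2: "?q \<ge> 2" by (rule q_ge2)
  show False
  proof (cases "n < t")
    case True
    define A0 where "A0 = {(\<lambda>_::nat. 0::'a)}"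
    have "A0 \<subseteq> vecs n" by (auto simp: A0_def vecs_def)
    moreover have "real (card A0) \<ge> (real ?q) powi (int n - int t + 1)"
    proof -
      have e: "int n - int t + 1 = - int (t - n - 1)" using True by simp
      have "(real ?q) ^ (t - n - 1) \<ge> 1" using q2 by (intro one_le_power) auto
      then have "(real ?q) powi (int n - int t + 1) \<le> 1"
        unfolding e power_int_minus power_int_of_nat by (simp add: inverse_le_1_iff)
      then show ?thesis by (simp add: A0_def)
    qed
    ultimately have "omega_dir n A0 \<ge> t" using P by blast
    then obtain V d where "d \<ge> t" "subspace_dim n (V :: (nat \<Rightarrow> 'a) set) d" using omega_ge by blast
    then show False using dim_le True by fastforce
  next
    case False
    then have nt: "n = t" using nt by simp
    define A1 where "A1 = {v::nat\<Rightarrow>'a. \<forall>i\<ge>1. v i = 0}"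
    have "A1 \<subseteq> vecs n" using t nt by (auto simp: A1_def vecs_def)
    moreover have "real (card A1) \<ge> (real ?q) powi (int n - int t + 1)"
    proof -
      have "A1 = (\<lambda>c i. if i = 0 then c else 0) ` UNIV"
      proof (auto simp: A1_def)
        fix v :: "nat \<Rightarrow> 'a" assume "\<forall>i\<ge>Suc 0. v i = 0"
        then have "v = (\<lambda>i. if i = 0 then v 0 else 0)" by (auto intro!: ext)
        then show "v \<in> range (\<lambda>c i. if i = 0 then c else 0)" by blast
      qed
      moreover have "inj (\<lambda>c (i::nat). if i = 0 then c else (0::'a))"
        by (rule injI) (metis)
      ultimately have "card A1 = ?q" by (simp add: card_image)
      then show ?thesis using nt by simp
    qed
    ultimately have "omega_dir n A1 \<ge> t" using P by blast
    then obtain V d where Vd: "d \<ge> t" "subspace_dim n (V :: (nat \<Rightarrow> 'a) set) d"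
      "V \<subseteq> dir_set n A1 \<union> {\<lambda>_. 0}" using omega_ge by blast
    have dn: "d = n" using dim_le[OF Vd(2)] Vd(1) nt by simp
    obtain B where B: "finite B" "B \<subseteq> vecs n" "card B = d" "lin_indep B" "V = lin_span B"
      using Vd(2) unfolding subspace_dim_def by blast
    have "V = vecs n"
    proof (rule card_subset_eq[OF finite_vecs])
      show "V \<subseteq> vecs n" using B lin_span_vecs by blast
      show "card V = card (vecs n :: (nat \<Rightarrow> 'a) set)"
        using B card_lin_span[OF B(1,4)] card_vecs[where 'a='a] dn by simp
    qed
    define e1 where "e1 = (\<lambda>i::nat. if i = 1 then (1::'a) else 0)"
    have "e1 \<in> vecs n" using t nt by (auto simp: e1_def vecs_def)
    moreover have "e1 \<noteq> (\<lambda>_. 0)" by (metis e1_def one_neq_zero)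
    ultimately have "e1 \<in> dir_set n A1" using Vd(3) \<open>V = vecs n\<close> by blast
    then obtain x where "\<forall>c. (\<lambda>i. x i + c * e1 i) \<in> A1" unfolding dir_set_def by blast
    then have "x 1 + 0 * e1 1 = 0" "x 1 + 1 * e1 1 = 0" unfolding A1_def by blast+
    then show False by (simp add: e1_def)
  qed
qed



lemma ramsey_at:
  fixes t n :: nat and red :: "(nat \<Rightarrow> 'a::{finite,field}) set \<Rightarrow> bool"
  assumes t: "t \<ge> 2" and P: "\<forall>A::(nat\<Rightarrow>'a) set. A \<subseteq> vecs n \<longrightarrow>
       real (card A) \<ge> (real (card (UNIV :: 'a set))) powi (int n - int t + 1) \<longrightarrow> omega_dir n A \<ge> t"
  shows "(\<exists>V. subspace_dim n V 2 \<and> (\<forall>L. subspace_dim n L 1 \<and> L \<subseteq> V \<longrightarrow> red L))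
     \<or> (\<exists>V. subspace_dim n V t \<and> (\<forall>L. subspace_dim n L 1 \<and> L \<subseteq> V \<longrightarrow> \<not> red L))"
proof (rule ccontr)
  assume H: "\<not> ?thesis"
  then have nored: "\<not> (\<exists>V. subspace_dim n V 2 \<and> (\<forall>L. subspace_dim n L 1 \<and> L \<subseteq> V \<longrightarrow> red L))" by blast
  have nt: "t + 1 \<le> n" using not_small[OF t P] .
  let ?q = "card (UNIV :: 'a set)"
  have q2: "?q \<ge> 2" by (rule q_ge2)
  define S where "S = {y \<in> vecs n. y \<noteq> (\<lambda>_. 0) \<and> red (lin_span {y})}"
  have Sv: "S \<subseteq> vecs n" by (auto simp: S_def)
  have z: "(\<lambda>_. 0) \<notin> S" by (auto simp: S_def)
  have scal: "scal_closed S"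
    unfolding scal_closed_def
  proof (intro ballI allI impI)
    fix y c assume y: "y \<in> S" and c: "(c::'a) \<noteq> 0"
    have "(\<lambda>i. c * y i) \<in> vecs n" using y by (auto simp: S_def vecs_def)
    moreover have "(\<lambda>i. c * y i) \<noteq> (\<lambda>_. 0)"
    proof
      assume "(\<lambda>i. c * y i) = (\<lambda>_. 0)"
      then have "y = (\<lambda>_. 0)" using c by (auto intro!: ext dest: fun_cong)
      then show False using y z by simp
    qed
    ultimately show "(\<lambda>i. c * y i) \<in> S" using y span_scal[OF c, of y] by (simp add: S_def)
  qed
  have scal': "\<And>y c. y \<in> S \<Longrightarrow> (c::'a) \<noteq> 0 \<Longrightarrow> (\<lambda>i. c * y i) \<in> S"
    using scal unfolding scal_closed_def by blast
  have noplane: False if u: "u \<in> vecs n" and v: "v \<in> vecs n" and uv: "u \<noteq> v"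
    and ind: "\<And>a b. (\<lambda>i. a * u i + b * v i) = (\<lambda>_. 0) \<Longrightarrow> a = 0 \<and> b = 0"
    and mem: "\<And>a b. (\<lambda>i. a * u i + b * v i) \<noteq> (\<lambda>_. 0) \<Longrightarrow> (\<lambda>i. a * u i + b * v i) \<in> S"
    for u v
  proof -
    have "subspace_dim n (lin_span {u,v}) 2" by (rule pair_dim[OF u v uv ind])
    moreover have "\<forall>L. subspace_dim n L 1 \<and> L \<subseteq> lin_span {u,v} \<longrightarrow> red L"
    proof (intro allI impI)
      fix L assume L: "subspace_dim n L 1 \<and> L \<subseteq> lin_span {u, v}"
      then obtain y where y: "y \<in> vecs n" "y \<noteq> (\<lambda>_. 0)" "L = lin_span {y}" using one_dim by blast
      have "y \<in> L" using y(3) lin_span_base[of "{y}" y] by simp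
      then have "y \<in> lin_span {u,v}" using L by blast
      then obtain a b where "y = (\<lambda>i. a * u i + b * v i)" using lin_span_pair[OF uv] by blast
      then have "y \<in> S" using mem y(2) by simp
      then show "red L" using y(3) by (simp add: S_def)
    qed
    ultimately show False using nored by blast
  qed
  have blue: "\<exists>V. subspace_dim n V t \<and> (\<forall>L. subspace_dim n L 1 \<and> L \<subseteq> V \<longrightarrow> \<not> red L)"
    if B: "finite B" "B \<subseteq> vecs n" "lin_indep B" "card B = t" "lin_span B \<inter> S = {}" for B
  proof (intro exI[of _ "lin_span B"] conjI allI impI)
    show "subspace_dim n (lin_span B) t" unfolding subspace_dim_def using B by blast
    fix L assume L: "subspace_dim n L 1 \<and> L \<subseteq> lin_span B"
    then obtain y where y: "y \<in> vecs n" "y \<noteq> (\<lambda>_. 0)" "L = lin_span {y}" using one_dim by blast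
    have "y \<in> L" using y(3) lin_span_base[of "{y}" y] by simp
    then have "y \<notin> S" using L B(5) by blast
    then show "\<not> red L" using y by (simp add: S_def)
  qed
  define k where "k = n - t + 1"
  have k2: "k \<ge> 2" and kn: "k + (t - 1) = n" using nt t by (auto simp: k_def)
  have "\<exists>V. subspace_dim n V t \<and> (\<forall>L. subspace_dim n L 1 \<and> L \<subseteq> V \<longrightarrow> \<not> red L)"
  proof (cases "card S \<ge> ?q ^ k")
    case True
    have e: "int n - int t + 1 = int k" using nt by (simp add: k_def)
    have "real (card S) \<ge> (real ?q) powi (int n - int t + 1)"
      unfolding e power_int_of_nat using True by (metis of_nat_le_iff of_nat_power)
    then have "omega_dir n S \<ge> t" using P Sv by blast
    then obtain V d where Vd: "d \<ge> t" "subspace_dim n V d" "V \<subseteq> dir_set n S \<union> {\<lambda>_. 0}"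
      using omega_ge by blast
    obtain B where B: "finite B" "B \<subseteq> vecs n" "card B = d" "lin_indep B" "V = lin_span B"
      using Vd(2) unfolding subspace_dim_def by blast
    obtain B' where B': "B' \<subseteq> B" "card B' = t" using obtain_subset_with_card_n Vd(1) B(3) by metis
    have finB': "finite B'" using B(1) B'(1) finite_subset by blast
    have indB': "lin_indep B'" using lin_indep_subset[OF B(1) B'(1) B(4)] .
    have spB': "lin_span B' \<subseteq> V" using lin_span_subset[OF B(1) B'(1)] B(5) by simp
    have "lin_span B' \<inter> S = {}"
    proof (rule ccontr)
      assume "lin_span B' \<inter> S \<noteq> {}"
      then obtain y where yS: "y \<in> S" and yV: "y \<in> V" using spB' by blast
      have "y \<noteq> (\<lambda>_. 0)" using yS z by auto
      then have "y \<in> dir_set n S" using yV Vd(3) by blast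
      then obtain x where x: "x \<in> vecs n" "\<And>c. (\<lambda>i. x i + c * y i) \<in> S"
        unfolding dir_set_def by blast
      have y0: "y \<noteq> (\<lambda>_. 0)" using yS z by auto
      show False
      proof (rule noplane[of x y])
        show "x \<in> vecs n" by fact
        show "y \<in> vecs n" using yS Sv by blast
        show "x \<noteq> y"
        proof
          assume "x = y"
          then have "(\<lambda>i. x i + (-1) * y i) = (\<lambda>_. 0)" by simp
          then show False using x(2)[of "-1"] z by simp
        qed
        fix a b
        {
          assume ab: "(\<lambda>i. a * x i + b * y i) = (\<lambda>_. 0)"
          have a0: "a = 0"
          proof (rule ccontr)
            assume a: "a \<noteq> 0"
            have "(\<lambda>i. x i + (b / a) * y i) = (\<lambda>_. 0)"
            proof
              fix i have "a * x i + b * y i = 0" using fun_cong[OF ab, of i] by simp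
              then show "x i + (b / a) * y i = 0" using a by (simp add: field_simps)
            qed
            then show False using x(2)[of "b / a"] z by simp
          qed
          moreover have "b = 0"
          proof (rule ccontr)
            assume "b \<noteq> 0"
            moreover obtain i where "y i \<noteq> 0" using y0 by auto
            ultimately show False using fun_cong[OF ab, of i] a0 by simp
          qed
          ultimately show "a = 0 \<and> b = 0" by simp
        }
        {
          assume ne: "(\<lambda>i. a * x i + b * y i) \<noteq> (\<lambda>_. 0)"
          show "(\<lambda>i. a * x i + b * y i) \<in> S"
          proof (cases "a = 0")
            case True
            then have "b \<noteq> 0" using ne by auto
            then show ?thesis using scal'[OF yS] True by simp
          next
            case False
            have "(\<lambda>i. a * (x i + (b / a) * y i)) \<in> S" using scal'[OF x(2) False] .
            moreover have "(\<lambda>i. a * (x i + (b / a) * y i)) = (\<lambda>i. a * x i + b * y i)"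
              using False by (auto simp: field_simps)
            ultimately show ?thesis by simp
          qed
        }
      qed
    qed
    then show ?thesis using blue finB' B(2) B'(1) indB' B'(2) by blast
  next
    case False
    then have Sk: "card S < ?q ^ k" by simp
    show ?thesis
    proof (cases "\<exists>s1\<in>S. \<exists>s2\<in>S. (\<lambda>i. s1 i - s2 i) \<notin> S \<and> (\<lambda>i. s1 i - s2 i) \<noteq> (\<lambda>_. 0)")
      case True
      then obtain s1 s2 where s: "s1 \<in> S" "s2 \<in> S" "(\<lambda>i. s1 i - s2 i) \<notin> S"
        "(\<lambda>i. s1 i - s2 i) \<noteq> (\<lambda>_. 0)" by blast
      define b where "b = (\<lambda>i. s1 i - s2 i)"
      have bv: "b \<in> vecs n"
      proof -
        have "s1 \<in> vecs n" "s2 \<in> vecs n" using s Sv by auto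
        then show ?thesis unfolding b_def vecs_def by simp
      qed
      have ind0: "lin_indep {b}" using single_indep s(4) b_def by simp
      have dis0: "lin_span {b} \<inter> S = {}"
      proof (rule ccontr)
        assume "lin_span {b} \<inter> S \<noteq> {}"
        then obtain a where aS: "(\<lambda>i. a * b i) \<in> S" unfolding lin_span_single by blast
        have a0: "a \<noteq> 0" using aS z by (auto)
        have "(\<lambda>i. (1 / a) * (a * b i)) \<in> S" by (rule scal'[OF aS]) (use a0 in simp)
        moreover have "(\<lambda>i. (1 / a) * (a * b i)) = b" using a0 by simp
        ultimately show False using s(3) b_def by simp
      qed
      obtain B' where B': "{b} \<subseteq> B'" "finite B'" "B' \<subseteq> vecs n" "lin_indep B'" "card B' = card {b} + (t - 2)"
        "lin_span B' \<inter> S = {}"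
        using ext_iter[of "{b}" n S "t - 2"] bv ind0 dis0 Sv scal arith1[OF q2 Sk] kn by fastforce
      have cB': "card B' = t - 1" using B'(5) t by simp
      have "card S * card (lin_span B') \<le> card (vecs n :: (nat \<Rightarrow> 'a) set) - card (lin_span B')"
        using arith2[OF Sk kn] card_lin_span[OF B'(2,4)] card_vecs[where 'a='a] cB' by simp
      moreover have "b \<in> lin_span B'" using lin_span_base[OF B'(2)] B'(1) by blast
      moreover have "s1 \<noteq> s2" using s(4) by auto
      ultimately obtain x where x: "x \<in> vecs n" "x \<notin> lin_span B'" "lin_indep (insert x B')"
          "lin_span (insert x B') \<inter> S = {}"
        using ext_step[OF B'(2,3,4,6) Sv scal] s(1,2) b_def by blast
      have "x \<notin> B'" using x(2) lin_span_base[OF B'(2)] by blast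
      then have "card (insert x B') = t" using cB' B'(2) t by simp
      then show ?thesis using blue[of "insert x B'"] x B' by simp
    next
      case False
      then have cl: "\<And>s1 s2. s1 \<in> S \<Longrightarrow> s2 \<in> S \<Longrightarrow> (\<lambda>i. s1 i - s2 i) \<noteq> (\<lambda>_. 0) \<Longrightarrow> (\<lambda>i. s1 i - s2 i) \<in> S"
        by blast
      have cS: "card S \<le> ?q - 1"
      proof (cases "S = {}")
        case True then show ?thesis by simp
      next
        case False
        then obtain p where p: "p \<in> S" by blast
        have p0: "p \<noteq> (\<lambda>_. 0)" using p z by auto
        have "S \<subseteq> (\<lambda>a i. a * p i) ` (UNIV - {0})"
        proof
          fix s assume sS: "s \<in> S"
          show "s \<in> (\<lambda>a i. a * p i) ` (UNIV - {0})"
          proof (rule ccontr)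
            assume nm: "s \<notin> (\<lambda>a i. a * p i) ` (UNIV - {0})"
            have s0: "s \<noteq> (\<lambda>_. 0)" using sS z by auto
            show False
            proof (rule noplane[of p s])
              show "p \<in> vecs n" using p Sv by blast
              show "s \<in> vecs n" using sS Sv by blast
              show "p \<noteq> s"
              proof
                assume "p = s"
                then have "s = (\<lambda>i. 1 * p i)" by simp
                moreover have "(1::'a) \<in> UNIV - {0}" by simp
                ultimately show False using nm by blast
              qed
              fix a b
              {
                assume ab: "(\<lambda>i. a * p i + b * s i) = (\<lambda>_. 0)"
                have b0: "b = 0"
                proof (rule ccontr)
                  assume b: "b \<noteq> 0"
                  have "s = (\<lambda>i. (- a / b) * p i)"
                  proof
                    fix i have "a * p i + b * s i = 0" using fun_cong[OF ab, of i] by simp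
                    then have "b * s i = - (a * p i)" by (simp add: eq_neg_iff_add_eq_0 add.commute)
                    then show "s i = (- a / b) * p i" using b by (simp add: field_simps)
                  qed
                  moreover have "- a / b \<noteq> 0" using s0 calculation by auto
                  ultimately show False using nm by blast
                qed
                moreover have "a = 0"
                proof (rule ccontr)
                  assume "a \<noteq> 0"
                  moreover obtain i where "p i \<noteq> 0" using p0 by auto
                  ultimately show False using fun_cong[OF ab, of i] b0 by simp
                qed
                ultimately show "a = 0 \<and> b = 0" by simp
              }
              {
                assume ne: "(\<lambda>i. a * p i + b * s i) \<noteq> (\<lambda>_. 0)"
                show "(\<lambda>i. a * p i + b * s i) \<in> S"
                proof (cases "a = 0")
                  case True
                  then have "b \<noteq> 0" using ne by auto
                  then show ?thesis using scal'[OF sS] True by simp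
                next
                  case a: False
                  show ?thesis
                  proof (cases "b = 0")
                    case True then show ?thesis using scal'[OF p a] by simp
                  next
                    case False
                    have eq: "(\<lambda>i. (a * p i) - ((- b) * s i)) = (\<lambda>i. a * p i + b * s i)" by simp
                    have "(\<lambda>i. (a * p i) - ((- b) * s i)) \<in> S"
                      by (rule cl[OF scal'[OF p a] scal'[OF sS]]) (use ne False eq in auto)
                    then show ?thesis unfolding eq .
                  qed
                qed
              }
            qed
          qed
        qed
        then have "card S \<le> card ((\<lambda>a i. a * p i) ` (UNIV - {0::'a}))"
          by (intro card_mono) auto
        also have "\<dots> \<le> card (UNIV - {0::'a})" by (rule card_image_le) auto
        also have "\<dots> = ?q - 1" by (simp add: card_Diff_subset)
        finally show ?thesis .
      qed
      have Sk1: "card S + 1 < ?q ^ k"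
      proof -
        have "?q ^ 2 \<le> ?q ^ k" using k2 q2 by (intro power_increasing) auto
        moreover have "?q < ?q ^ 2" using q2 by (simp add: power2_eq_square)
        ultimately show ?thesis using cS q2 by linarith
      qed
      have Sk': "card S < ?q ^ k" using Sk1 by simp
      have dis0: "lin_span {} \<inter> S = {}" using z by (auto simp: lin_span_def lin_comb_empty)
      obtain B' where B': "finite B'" "B' \<subseteq> vecs n" "lin_indep B'" "card B' = 0 + (t - 1)"
        "lin_span B' \<inter> S = {}"
        using ext_iter[of "{}" n S "t - 1"] dis0 Sv scal arith1[OF q2 Sk'] kn
        by (fastforce simp: lin_indep_def)
      have cB': "card B' = t - 1" using B'(4) by simp
      have "card S * card (lin_span B') < card (vecs n :: (nat \<Rightarrow> 'a) set) - card (lin_span B')"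
        using arith3[OF q2 Sk1 kn] card_lin_span[OF B'(1,3)] card_vecs[where 'a='a] cB' by simp
      then obtain x where x: "x \<in> vecs n" "x \<notin> lin_span B'" "lin_indep (insert x B')"
          "lin_span (insert x B') \<inter> S = {}"
        using ext_step[OF B'(1,2,3,5) Sv scal] by blast
      have "x \<notin> B'" using x(2) lin_span_base[OF B'(1)] by blast
      then have "card (insert x B') = t" using cB' B'(1) t by simp
      then show ?thesis using blue[of "insert x B'"] x B' by simp
    qed
  qed
  then show False using H by blast
qed

theorem lemma6p2:
  fixes t :: nat
  assumes "t \<ge> 2"
  shows "R_q TYPE('a::{finite,field}) 2 t \<le> m_q TYPE('a) t"
  unfolding m_q_def
proof (rule Inf_greatest)
  fix y assume "y \<in> {enat n | n. \<forall>A::(nat \<Rightarrow> 'a) set. A \<subseteq> vecs n \<longrightarrow>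
       real (card A) \<ge> (real (card (UNIV :: 'a set))) powi (int n - int t + 1) \<longrightarrow> omega_dir n A \<ge> t}"
  then obtain n where y: "y = enat n" and P: "\<forall>A::(nat \<Rightarrow> 'a) set. A \<subseteq> vecs n \<longrightarrow>
       real (card A) \<ge> (real (card (UNIV :: 'a set))) powi (int n - int t + 1) \<longrightarrow> omega_dir n A \<ge> t"
    by blast
  have "enat n \<in> {enat n | n. \<forall>red :: (nat \<Rightarrow> 'a) set \<Rightarrow> bool.
       (\<exists>V. subspace_dim n V 2 \<and> (\<forall>L. subspace_dim n L 1 \<and> L \<subseteq> V \<longrightarrow> red L))
     \<or> (\<exists>V. subspace_dim n V t \<and> (\<forall>L. subspace_dim n L 1 \<and> L \<subseteq> V \<longrightarrow> \<not> red L))}"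
    using ramsey_at[OF assms P] by blast
  then show "R_q TYPE('a) 2 t \<le> y" unfolding R_q_def y by (rule Inf_lower)
qed

end
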